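(* Let $X\subset\mathbb{R}^2$ be a finite set with centroid $M$ and $1$-centre $C$. Then $M$ is the quadratic min-power centre of $X$ if and only if $M=C$.
   Context: Writing $X=\{x_j:j\in J\}$, the quadratic min-power centre is the unique minimiser of $P(s)=\sum_{j\in J}\|s-x_j\|^2+\max_{j\in J}\|s-x_j\|^2$; $M=\frac{1}{|J|}\sum_j x_j$; $C$ is the centre of the minimum enclosing circle of $X$. *)

theory Defs
  imports "HOL-Analysis.Analysis"
begin

definition qpower :: "(real^2) set \<Rightarrow> real^2 \<Rightarrow> real" where
  "qpower X s = (\<Sum>x\<in>X. (dist s x)\<^sup>2) + (MAX x\<in>X. (dist s x)\<^sup>2)"

definition is_qmp_centre :: "(real^2) set \<Rightarrow> real^2 \<Rightarrow> bool" where
  "is_qmp_centre X s \<longleftrightarrow> (\<forall>t. qpower X s \<le> qpower X t)"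

definition centroid :: "(real^2) set \<Rightarrow> real^2" where
  "centroid X = (1 / real (card X)) *\<^sub>R (\<Sum>x\<in>X. x)"

definition is_one_centre :: "(real^2) set \<Rightarrow> real^2 \<Rightarrow> bool" where
  "is_one_centre X c \<longleftrightarrow> (\<forall>t. (MAX x\<in>X. dist c x) \<le> (MAX x\<in>X. dist t x))"

end

theory Submission
  imports Defs
begin

lemma norm_comb:
  fixes u v :: "'a::real_inner"
  shows "(norm ((1-e)*\<^sub>R u + e *\<^sub>R v))^2 = (1-e)*(norm u)^2 + e*(norm v)^2 - e*(1-e)*(norm (u-v))^2"
  by (simp add: power2_norm_eq_inner inner_simps inner_commute algebra_simps)

lemma sum_ident:
  fixes X :: "(real^2) set"
  assumes "finite X" "X \<noteq> {}"
  shows "(\<Sum>x\<in>X. (dist s x)\<^sup>2) = (\<Sum>x\<in>X. (dist (centroid X) x)\<^sup>2) + real (card X) * (dist s (centroid X))\<^sup>2"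
proof -
  define M where "M = centroid X"
  have cpos: "real (card X) > 0" using assms by (simp add: card_gt_0_iff)
  have sM: "(\<Sum>x\<in>X. x) = real (card X) *\<^sub>R M" using cpos by (simp add: M_def centroid_def)
  have e: "(dist s x)\<^sup>2 = (norm (s - M))\<^sup>2 + 2 * inner (s - M) (M - x) + (dist M x)\<^sup>2" for x
  proof -
    have "s - x = (s - M) + (M - x)" by simp
    hence "(dist s x)\<^sup>2 = (norm ((s - M) + (M - x)))\<^sup>2" by (simp add: dist_norm)
    also have "\<dots> = (norm (s - M))\<^sup>2 + 2 * inner (s - M) (M - x) + (norm (M - x))\<^sup>2"
      by (simp add: power2_norm_eq_inner inner_simps inner_commute algebra_simps)
    finally show ?thesis by (simp add: dist_norm)
  qed
  have z: "(\<Sum>x\<in>X. inner (s - M) (M - x)) = 0"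
  proof -
    have "(\<Sum>x\<in>X. inner (s - M) (M - x)) = inner (s - M) (\<Sum>x\<in>X. (M - x))"
      by (simp add: inner_sum_right)
    also have "(\<Sum>x\<in>X. (M - x)) = real (card X) *\<^sub>R M - (\<Sum>x\<in>X. x)"
      by (simp add: sum_subtractf scaleR_conv_of_real)
    also have "\<dots> = 0" using sM by simp
    finally show ?thesis by simp
  qed
  have "(\<Sum>x\<in>X. (dist s x)\<^sup>2) = (\<Sum>x\<in>X. (norm (s - M))\<^sup>2 + 2 * inner (s - M) (M - x) + (dist M x)\<^sup>2)"
    using e by simp
  also have "\<dots> = real (card X) * (norm (s - M))\<^sup>2 + 2 * (\<Sum>x\<in>X. inner (s - M) (M - x)) + (\<Sum>x\<in>X. (dist M x)\<^sup>2)"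
    by (simp add: sum.distrib sum_distrib_left)
  finally show ?thesis using z by (simp add: M_def dist_norm)
qed


lemma F_props:
  fixes X :: "(real^2) set"
  assumes "finite X" "X \<noteq> {}"
  shows "\<And>x. x \<in> X \<Longrightarrow> (dist s x)\<^sup>2 \<le> (MAX x\<in>X. (dist s x)\<^sup>2)"
    and "(MAX x\<in>X. (dist s x)\<^sup>2) = (MAX x\<in>X. dist s x)\<^sup>2"
    and "0 \<le> (MAX x\<in>X. dist s x)"
proof -
  show "\<And>x. x \<in> X \<Longrightarrow> (dist s x)\<^sup>2 \<le> (MAX x\<in>X. (dist s x)\<^sup>2)"
    using assms by simp
  obtain y where y: "y \<in> X" "(MAX x\<in>X. (dist s x)\<^sup>2) = (dist s y)\<^sup>2"
    proof -
    have "Max ((\<lambda>x. (dist s x)\<^sup>2) ` X) \<in> (\<lambda>x. (dist s x)\<^sup>2) ` X" using assms by (intro Max_in) auto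
    thus ?thesis using that by blast
  qed
  obtain z where z: "z \<in> X" "(MAX x\<in>X. dist s x) = dist s z"
    proof -
    have "Max ((\<lambda>x. dist s x) ` X) \<in> (\<lambda>x. dist s x) ` X" using assms by (intro Max_in) auto
    thus ?thesis using that by blast
  qed
  have a: "dist s y \<le> (MAX x\<in>X. dist s x)" using assms y by simp
  have b: "(dist s z)\<^sup>2 \<le> (MAX x\<in>X. (dist s x)\<^sup>2)" using assms z by simp
  show "0 \<le> (MAX x\<in>X. dist s x)" using z by simp
  show "(MAX x\<in>X. (dist s x)\<^sup>2) = (MAX x\<in>X. dist s x)\<^sup>2"
    using a b y z by (metis antisym power_mono zero_le_dist)
qed

lemma F_conv:
  fixes X :: "(real^2) set"
  assumes "finite X" "X \<noteq> {}" "0 \<le> e" "e \<le> 1"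
  shows "(MAX x\<in>X. (dist ((1-e)*\<^sub>R a + e*\<^sub>R b) x)\<^sup>2) \<le>
     (1-e)*(MAX x\<in>X. (dist a x)\<^sup>2) + e*(MAX x\<in>X. (dist b x)\<^sup>2) - e*(1-e)*(norm (a-b))\<^sup>2"
proof -
  have "(dist ((1-e)*\<^sub>R a + e*\<^sub>R b) x)\<^sup>2 \<le>
     (1-e)*(MAX x\<in>X. (dist a x)\<^sup>2) + e*(MAX x\<in>X. (dist b x)\<^sup>2) - e*(1-e)*(norm (a-b))\<^sup>2"
    if x: "x \<in> X" for x
  proof -
    have "(1-e)*\<^sub>R a + e*\<^sub>R b - x = (1-e)*\<^sub>R (a - x) + e*\<^sub>R (b - x)"
      by (simp add: algebra_simps)
    hence "(dist ((1-e)*\<^sub>R a + e*\<^sub>R b) x)\<^sup>2 = (1-e)*(dist a x)\<^sup>2 + e*(dist b x)\<^sup>2 - e*(1-e)*(norm (a-b))\<^sup>2"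
      using norm_comb[of e "a - x" "b - x"] by (simp add: dist_norm)
    moreover have "(1-e)*(dist a x)\<^sup>2 \<le> (1-e)*(MAX x\<in>X. (dist a x)\<^sup>2)"
      using assms x by (intro mult_left_mono) auto
    moreover have "e*(dist b x)\<^sup>2 \<le> e*(MAX x\<in>X. (dist b x)\<^sup>2)"
      using assms x by (intro mult_left_mono) auto
    ultimately show ?thesis by linarith
  qed
  thus ?thesis using assms by simp
qed

theorem corollary2:
  fixes X :: "(real^2) set" and C :: "real^2"
  assumes "finite X" and "X \<noteq> {}"
    and "is_one_centre X C"
  shows "is_qmp_centre X (centroid X) \<longleftrightarrow> centroid X = C"
proof -
  define M where "M = centroid X"
  define F where "F s = (MAX x\<in>X. (dist s x)\<^sup>2)" for s
  define S where "S = (\<Sum>x\<in>X. (dist M x)\<^sup>2)"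
  define n where "n = real (card X)"
  have npos: "n > 0" using assms by (simp add: n_def card_gt_0_iff)
  have P: "qpower X s = S + n * (dist s M)\<^sup>2 + F s" for s
    using sum_ident[OF assms(1,2), of s] by (simp add: qpower_def S_def F_def M_def n_def)
  have FD: "F s = (MAX x\<in>X. dist s x)\<^sup>2" "0 \<le> (MAX x\<in>X. dist s x)" for s
    using F_props[OF assms(1,2)] by (auto simp: F_def)
  have Cmin: "F C \<le> F t" for t
    using assms(3) FD[of C] FD[of t] unfolding is_one_centre_def
    by (metis power_mono)
  have uniq: "a = b" if a: "\<And>t. F a \<le> F t" and b: "\<And>t. F b \<le> F t" for a b
  proof -
    define m where "m = (1-1/2)*\<^sub>R a + (1/2::real)*\<^sub>R b"
    define N where "N = (norm (a-b))\<^sup>2"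
    have 1: "F m \<le> (1/2)*F a + (1/2)*F b - (1/4)*N"
      using F_conv[OF assms(1,2), of "1/2" a b] by (simp add: F_def m_def N_def)
    have 2: "F a \<le> F m" using a by blast
    have 3: "F a = F b" using a b by (meson antisym)
    from 1 2 3 have "N \<le> 0" by linarith
    thus ?thesis by (simp add: N_def)
  qed
  show ?thesis
  proof
    assume q: "is_qmp_centre X (centroid X)"
    have "F M \<le> F t" for t
    proof (rule ccontr)
      assume "\<not> F M \<le> F t"
      define \<delta> where "\<delta> = F M - F t"
      have dpos: "\<delta> > 0" using \<open>\<not> F M \<le> F t\<close> by (simp add: \<delta>_def)
      define d where "d = (norm (t - M))\<^sup>2"
      have d0: "d \<ge> 0" by (simp add: d_def)
      define e where "e = min 1 (\<delta> / (2 * (n * d + 1)))"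
      have ndpos: "n * d + 1 > 0" using npos d0 by (smt (verit) mult_nonneg_nonneg)
      have epos: "e > 0" using dpos ndpos by (simp add: e_def)
      have e1: "e \<le> 1" by (simp add: e_def)
      have ele: "e \<le> \<delta> / (2 * (n * d + 1))" by (simp add: e_def)
      hence "e * (2 * (n * d + 1)) \<le> \<delta>" using ndpos by (simp add: field_simps)
      moreover have "n * e * d \<ge> 0" using npos epos d0 by simp
      ultimately have ned: "n * e * d < \<delta>" using epos by (simp add: algebra_simps)
      define s where "s = (1-e)*\<^sub>R M + e*\<^sub>R t"
      have Fs: "F s \<le> (1-e)*F M + e*F t"
      proof -
        have "F s \<le> (1-e)*F M + e*F t - e*(1-e)*(norm (M-t))\<^sup>2"
          using F_conv[OF assms(1,2) less_imp_le[OF epos] e1, of M t] by (simp add: F_def s_def)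
        moreover have "e*(1-e)*(norm (M-t))\<^sup>2 \<ge> 0" using epos e1 by simp
        ultimately show ?thesis by linarith
      qed
      have sM: "s - M = e *\<^sub>R (t - M)" by (simp add: s_def algebra_simps)
      have ds: "(dist s M)\<^sup>2 = e^2 * d"
        by (simp add: dist_norm sM d_def power_mult_distrib)
      have "qpower X s = S + n * (e^2 * d) + F s" using P ds by simp
      also have "\<dots> \<le> S + n * (e^2 * d) + F M - e * \<delta>" using Fs by (simp add: \<delta>_def algebra_simps)
      also have "n * (e^2 * d) = e * (n * e * d)" by (simp add: power2_eq_square algebra_simps)
      also have "S + e * (n * e * d) + F M - e * \<delta> < S + F M"
        using ned epos by (simp add: mult_strict_left_mono)
      also have "S + F M = qpower X M" using P by simp
      finally have "qpower X s < qpower X M" .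
      with q show False unfolding is_qmp_centre_def M_def by (meson not_le)
    qed
    thus "centroid X = C" using uniq Cmin M_def by blast
  next
    assume "centroid X = C"
    hence MC: "M = C" by (simp add: M_def)
    show "is_qmp_centre X (centroid X)" unfolding is_qmp_centre_def
    proof
      fix t
      have "qpower X M = S + F M" using P by simp
      also have "\<dots> \<le> S + n * (dist t M)\<^sup>2 + F t" using Cmin[of t] MC npos by (simp add: add_increasing)
      also have "\<dots> = qpower X t" using P by simp
      finally show "qpower X (centroid X) \<le> qpower X t" by (simp add: M_def)
    qed
  qed
qed

end
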